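(* Let $A$ be a UFD containing $\mathbb{Q}$, $K=\operatorname{frac}(A)$, $B=A^{[n]}$ and $D\in\operatorname{LND}_A(B)$. Let $D_K$ be the extension of $D$ to $K^{[n]}$. If $D$ is irreducible, then $D_K$ is irreducible.
   Context: $A^{[n]}$ denotes the polynomial ring in $n$ variables over $A$; $\operatorname{LND}_A(B)$ is the set of locally nilpotent $A$-derivations of $B$. A derivation $D$ of a domain $R$ is reducible if $D(R)\subset fR$ for some non-unit $f\in R$, and irreducible otherwise. *)

theory Defs
  imports "HOL-Library.Poly_Mapping" "HOL-Computational_Algebra.Fraction_Field"
    "HOL-Computational_Algebra.Factorial_Ring"
begin

text \<open>Polynomials with coefficients in 'b in the variables x_0, x_1, ...:
  finitely supported maps from monomials (exponent vectors) to coefficients.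
  The polynomial ring R^[n] is the subring of those involving only x_0..x_(n-1).\<close>

type_synonym 'b mpoly = "(nat \<Rightarrow>\<^sub>0 nat) \<Rightarrow>\<^sub>0 'b"

definition polys :: "nat \<Rightarrow> ('b::comm_ring_1) mpoly set" where
  "polys n = {p. \<forall>m \<in> Poly_Mapping.keys p. \<forall>i \<in> Poly_Mapping.keys m. i < n}"

definition mconst :: "'b::comm_ring_1 \<Rightarrow> 'b mpoly" where
  "mconst c = Poly_Mapping.single 0 c"

definition is_R_derivation :: "nat \<Rightarrow> (('b::comm_ring_1) mpoly \<Rightarrow> 'b mpoly) \<Rightarrow> bool" where
  "is_R_derivation n D \<longleftrightarrow>
     (\<forall>f \<in> polys n. D f \<in> polys n) \<and>
     (\<forall>f \<in> polys n. \<forall>g \<in> polys n. D (f + g) = D f + D g) \<and>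
     (\<forall>f \<in> polys n. \<forall>g \<in> polys n. D (f * g) = f * D g + g * D f) \<and>
     (\<forall>c. D (mconst c) = 0)"

definition is_LND :: "nat \<Rightarrow> (('b::comm_ring_1) mpoly \<Rightarrow> 'b mpoly) \<Rightarrow> bool" where
  "is_LND n D \<longleftrightarrow> is_R_derivation n D \<and> (\<forall>f \<in> polys n. \<exists>k. (D ^^ k) f = 0)"

definition reducible_der :: "nat \<Rightarrow> (('b::comm_ring_1) mpoly \<Rightarrow> 'b mpoly) \<Rightarrow> bool" where
  "reducible_der n D \<longleftrightarrow>
     (\<exists>f \<in> polys n. \<not> (\<exists>u \<in> polys n. f * u = 1) \<and>
        (\<forall>g \<in> polys n. \<exists>h \<in> polys n. D g = f * h))"

definition irreducible_der :: "nat \<Rightarrow> (('b::comm_ring_1) mpoly \<Rightarrow> 'b mpoly) \<Rightarrow> bool" where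
  "irreducible_der n D \<longleftrightarrow> \<not> reducible_der n D"

definition to_K :: "('a::idom) mpoly \<Rightarrow> 'a fract mpoly" where
  "to_K p = Poly_Mapping.map (\<lambda>a. Fract a 1) p"

end

theory Submission
  imports Defs
begin


lemma Fract1_eq_iff: "Fract (a::'a::idom) 1 = Fract b 1 \<longleftrightarrow> a = b"
  by (simp add: eq_fract)

lemma Fract1_0: "Fract (a::'a::idom) 1 = 0 \<longleftrightarrow> a = 0"
  using Fract1_eq_iff[of a 0] by (simp add: fract_collapse)

lemma Fract1_add: "Fract ((a::'a::idom) + b) 1 = Fract a 1 + Fract b 1"
  by simp

lemma Fract1_mult: "Fract ((a::'a::idom) * b) 1 = Fract a 1 * Fract b 1"
  by simp

lemma lookup_to_K: "Poly_Mapping.lookup (to_K p) k = Fract (Poly_Mapping.lookup p k) 1"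
  unfolding to_K_def by (simp add: map.rep_eq when_def fract_collapse)

lemma keys_to_K [simp]: "Poly_Mapping.keys (to_K p) = Poly_Mapping.keys p"
  by (auto simp: in_keys_iff lookup_to_K Fract1_0)

lemma to_K_inj: "to_K p = to_K q \<Longrightarrow> p = q"
  by (rule poly_mapping_eqI) (metis lookup_to_K Fract1_eq_iff)

lemma fract_sum: "Fract (sum h S) 1 = (\<Sum>x\<in>S. Fract (h x) 1)"
  by (induction S rule: infinite_finite_induct) (auto simp: fract_collapse Fract1_add simp del: add_fract)

lemma lookup_mconst_mult: "Poly_Mapping.lookup (mconst c * p) k = c * Poly_Mapping.lookup p k"
  unfolding mconst_def mult_map_scale_conv_mult[symmetric] by (simp add: map.rep_eq when_def)

lemma mconst_mult: "mconst a * mconst b = mconst (a * b)"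
  unfolding mconst_def by (simp add: mult_single)

lemma mconst_1: "mconst 1 = 1"
  unfolding mconst_def by simp

lemma lookup_mult_keys:
  "Poly_Mapping.lookup (f * g) k = (\<Sum>(l,r)\<in>Poly_Mapping.keys f \<times> Poly_Mapping.keys g. Poly_Mapping.lookup f l * Poly_Mapping.lookup g r when k = l + r)"
proof -
  have inner: "(\<Sum>r. Poly_Mapping.lookup g r when k = l + r) = (\<Sum>r\<in>Poly_Mapping.keys g. Poly_Mapping.lookup g r when k = l + r)" for l
    by (rule Sum_any.expand_superset) (auto simp: in_keys_iff)
  have "Poly_Mapping.lookup (f * g) k = (\<Sum>l. Poly_Mapping.lookup f l * (\<Sum>r\<in>Poly_Mapping.keys g. Poly_Mapping.lookup g r when k = l + r))"
    unfolding lookup_mult inner ..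
  also have "\<dots> = (\<Sum>l\<in>Poly_Mapping.keys f. Poly_Mapping.lookup f l * (\<Sum>r\<in>Poly_Mapping.keys g. Poly_Mapping.lookup g r when k = l + r))"
    by (rule Sum_any.expand_superset) (auto simp: in_keys_iff)
  also have "\<dots> = (\<Sum>l\<in>Poly_Mapping.keys f. \<Sum>r\<in>Poly_Mapping.keys g. Poly_Mapping.lookup f l * Poly_Mapping.lookup g r when k = l + r)"
    by (simp only: sum_distrib_left mult_when)
  also have "\<dots> = (\<Sum>(l,r)\<in>Poly_Mapping.keys f \<times> Poly_Mapping.keys g. Poly_Mapping.lookup f l * Poly_Mapping.lookup g r when k = l + r)"
    by (rule sum.cartesian_product)
  finally show ?thesis .
qed

lemma to_K_mult: "to_K (f * g) = to_K f * to_K g"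
proof (rule poly_mapping_eqI)
  fix k
  show "Poly_Mapping.lookup (to_K (f * g)) k = Poly_Mapping.lookup (to_K f * to_K g) k"
    unfolding lookup_mult_keys lookup_to_K keys_to_K fract_sum
    by (rule sum.cong) (auto simp: when_def fract_collapse Fract1_mult simp del: mult_fract)
qed

lemma to_K_0 [simp]: "to_K 0 = 0"
  by (rule poly_mapping_eqI) (simp add: lookup_to_K fract_collapse)

lemma to_K_mconst: "to_K (mconst c) = mconst (Fract c 1)"
  by (rule poly_mapping_eqI) (simp add: lookup_to_K mconst_def lookup_single when_def fract_collapse)

lemma polys_mult: "p \<in> polys n \<Longrightarrow> q \<in> polys n \<Longrightarrow> p * q \<in> polys n"
proof -
  assume p: "p \<in> polys n" and q: "q \<in> polys n"
  show ?thesis unfolding polys_def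
  proof (intro CollectI ballI)
    fix m i assume m: "m \<in> Poly_Mapping.keys (p * q)" and i: "i \<in> Poly_Mapping.keys m"
    have "m \<in> {a + b | a b. a \<in> Poly_Mapping.keys p \<and> b \<in> Poly_Mapping.keys q}"
      using subsetD[OF keys_mult m] .
    then obtain a b where ab: "m = a + b" "a \<in> Poly_Mapping.keys p" "b \<in> Poly_Mapping.keys q"
      by auto
    have "i \<in> Poly_Mapping.keys a \<union> Poly_Mapping.keys b"
      using subsetD[OF keys_add, of i a b] i ab(1) by simp
    moreover have "\<forall>i\<in>Poly_Mapping.keys a. i < n" using p ab(2) unfolding polys_def by simp
    moreover have "\<forall>i\<in>Poly_Mapping.keys b. i < n" using q ab(3) unfolding polys_def by simp
    ultimately show "i < n" by blast
  qed
qed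

lemma mconst_polys: "mconst c \<in> polys n"
  unfolding polys_def mconst_def by simp



lemma prime_content:
  fixes f g :: "'a::{factorial_semiring,idom} mpoly"
  assumes q: "prime q" and fg: "\<forall>m. q dvd Poly_Mapping.lookup (f * g) m"
    and nf: "\<not> (\<forall>m. q dvd Poly_Mapping.lookup f m)"
  shows "\<forall>m. q dvd Poly_Mapping.lookup g m"
proof (rule ccontr)
  assume ng: "\<not> (\<forall>m. q dvd Poly_Mapping.lookup g m)"
  define Sf where "Sf = {m. \<not> q dvd Poly_Mapping.lookup f m}"
  define Sg where "Sg = {m. \<not> q dvd Poly_Mapping.lookup g m}"
  have Sfk: "Sf \<subseteq> Poly_Mapping.keys f"
  proof
    fix m assume "m \<in> Sf"
    then have "Poly_Mapping.lookup f m \<noteq> 0" unfolding Sf_def by auto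
    then show "m \<in> Poly_Mapping.keys f" by (rule in_keys_iff[THEN iffD2])
  qed
  have Sgk: "Sg \<subseteq> Poly_Mapping.keys g"
  proof
    fix m assume "m \<in> Sg"
    then have "Poly_Mapping.lookup g m \<noteq> 0" unfolding Sg_def by auto
    then show "m \<in> Poly_Mapping.keys g" by (rule in_keys_iff[THEN iffD2])
  qed
  have finSf: "finite Sf" using finite_subset[OF Sfk finite_keys] .
  have finSg: "finite Sg" using finite_subset[OF Sgk finite_keys] .
  have neSf: "Sf \<noteq> {}" using nf unfolding Sf_def by auto
  have neSg: "Sg \<noteq> {}" using ng unfolding Sg_def by auto
  define mf where "mf = Max Sf"
  define mg where "mg = Max Sg"
  have mfS: "mf \<in> Sf" unfolding mf_def using finSf neSf by (rule Max_in)
  have mgS: "mg \<in> Sg" unfolding mg_def using finSg neSg by (rule Max_in)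
  have abf: "q dvd Poly_Mapping.lookup f l" if "mf < l" for l
  proof (rule ccontr)
    assume "\<not> q dvd Poly_Mapping.lookup f l"
    then have "l \<in> Sf" unfolding Sf_def by simp
    then have "l \<le> mf" unfolding mf_def using Max_ge[OF finSf] by blast
    with that show False by simp
  qed
  have abg: "q dvd Poly_Mapping.lookup g r" if "mg < r" for r
  proof (rule ccontr)
    assume "\<not> q dvd Poly_Mapping.lookup g r"
    then have "r \<in> Sg" unfolding Sg_def by simp
    then have "r \<le> mg" unfolding mg_def using Max_ge[OF finSg] by blast
    with that show False by simp
  qed
  define T where "T = Poly_Mapping.keys f \<times> Poly_Mapping.keys g"
  define F where "F = (\<lambda>(l,r). Poly_Mapping.lookup f l * Poly_Mapping.lookup g r when mf + mg = l + r)"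
  have inT: "(mf, mg) \<in> T" unfolding T_def using mfS mgS Sfk Sgk by auto
  have finT: "finite T" unfolding T_def by simp
  have "Poly_Mapping.lookup (f * g) (mf + mg) = sum F T"
    unfolding lookup_mult_keys T_def F_def ..
  also have "\<dots> = F (mf, mg) + sum F (T - {(mf, mg)})"
    using finT inT by (rule sum.remove)
  finally have eq: "Poly_Mapping.lookup (f * g) (mf + mg) = F (mf, mg) + sum F (T - {(mf, mg)})" .
  have rest: "q dvd sum F (T - {(mf, mg)})"
  proof (rule dvd_sum)
    fix lr assume lr: "lr \<in> T - {(mf, mg)}"
    obtain l r where lr_eq: "lr = (l, r)" by fastforce
    show "q dvd F lr"
    proof (cases "mf + mg = l + r")
      case False then show ?thesis by (simp add: F_def lr_eq)
    next
      case True
      have Fv: "F lr = Poly_Mapping.lookup f l * Poly_Mapping.lookup g r" by (simp add: F_def lr_eq True)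
      show ?thesis
      proof (cases "mf < l")
        case True then show ?thesis using abf Fv by simp
      next
        case nl: False
        show ?thesis
        proof (cases "mg < r")
          case True then show ?thesis using abg Fv by simp
        next
          case nr: False
          have l1: "l \<le> mf" using nl by simp
          have r1: "r \<le> mg" using nr by simp
          have "l = mf"
          proof (rule ccontr)
            assume "l \<noteq> mf"
            with l1 have "l < mf" by simp
            then have "l + r < mf + mg" using r1 by (rule add_less_le_mono)
            with True show False by simp
          qed
          with True have "r = mg" by simp
          with \<open>l = mf\<close> lr lr_eq show ?thesis by simp
        qed
      qed
    qed
  qed
  have "q dvd F (mf, mg)"
    using fg[rule_format, of "mf + mg"] unfolding eq by (simp add: dvd_add_left_iff[OF rest])
  then have "q dvd Poly_Mapping.lookup f mf * Poly_Mapping.lookup g mg" by (simp add: F_def)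
  then show False using q mfS mgS unfolding Sf_def Sg_def by (simp add: prime_dvd_mult_iff)
qed

lemma lookup_pmap: "Poly_Mapping.lookup (Poly_Mapping.map c p) k = (c (Poly_Mapping.lookup p k) when Poly_Mapping.lookup p k \<noteq> 0)"
  by (simp add: map.rep_eq)

lemma clear_denoms:
  fixes h :: "'a::idom fract mpoly"
  shows "\<exists>d h0. d \<noteq> 0 \<and> to_K h0 = mconst (Fract d 1) * h"
proof -
  have "\<forall>k. \<exists>a b. b \<noteq> 0 \<and> Poly_Mapping.lookup h k = Fract a b"
  proof
    fix k show "\<exists>a b. b \<noteq> 0 \<and> Poly_Mapping.lookup h k = Fract a b"
      by (cases "Poly_Mapping.lookup h k") auto
  qed
  then obtain N B where NB: "\<And>k. B k \<noteq> 0" "\<And>k. Poly_Mapping.lookup h k = Fract (N k) (B k)"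
    by metis
  define d where "d = (\<Prod>k\<in>Poly_Mapping.keys h. B k)"
  have dnz: "d \<noteq> 0" unfolding d_def using NB(1) by simp
  have ex: "\<exists>a. Fract d 1 * Poly_Mapping.lookup h k = Fract a 1" for k
  proof (cases "k \<in> Poly_Mapping.keys h")
    case True
    then have "B k dvd d" unfolding d_def by (intro dvd_prodI) simp_all
    then obtain e where e: "d = B k * e" by (rule dvdE)
    have "Fract d 1 * Poly_Mapping.lookup h k = Fract (d * N k) (B k)" by (simp add: NB(2))
    also have "\<dots> = Fract (e * N k) 1" using NB(1)[of k] by (simp add: eq_fract e algebra_simps)
    finally show ?thesis by blast
  next
    case False
    then have "Poly_Mapping.lookup h k = 0" by (simp add: in_keys_iff)
    then show ?thesis by (intro exI[of _ 0]) (simp add: fract_collapse)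
  qed
  define c where "c x = (SOME a. Fract d 1 * x = Fract a 1)" for x
  have cx: "Fract (c (Poly_Mapping.lookup h k)) 1 = Fract d 1 * Poly_Mapping.lookup h k" for k
    unfolding c_def by (rule someI_ex[OF ex, symmetric])
  have "to_K (Poly_Mapping.map c h) = mconst (Fract d 1) * h"
  proof (rule poly_mapping_eqI)
    fix k
    show "Poly_Mapping.lookup (to_K (Poly_Mapping.map c h)) k = Poly_Mapping.lookup (mconst (Fract d 1) * h) k"
      unfolding lookup_to_K lookup_mconst_mult lookup_pmap
      using cx[of k] by (cases "Poly_Mapping.lookup h k = 0") (simp_all add: fract_collapse)
  qed
  with dnz show ?thesis by blast
qed

lemma div_out:
  fixes f :: "'a::{factorial_semiring,idom} mpoly"
  assumes "\<forall>m. q dvd Poly_Mapping.lookup f m"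
  shows "f = mconst q * Poly_Mapping.map (\<lambda>a. a div q) f"
proof (rule poly_mapping_eqI)
  fix k
  show "Poly_Mapping.lookup f k = Poly_Mapping.lookup (mconst q * Poly_Mapping.map (\<lambda>a. a div q) f) k"
    unfolding lookup_mconst_mult lookup_pmap using assms[rule_format, of k]
    by (cases "Poly_Mapping.lookup f k = 0") simp_all
qed

lemma mconst_cancel:
  fixes A B :: "'a::field mpoly"
  assumes "c \<noteq> 0" "mconst c * A = mconst c * B"
  shows "A = B"
proof (rule poly_mapping_eqI)
  fix k
  have "c * Poly_Mapping.lookup A k = c * Poly_Mapping.lookup B k"
    using arg_cong[OF assms(2), of "\<lambda>p. Poly_Mapping.lookup p k"] unfolding lookup_mconst_mult .
  then show "Poly_Mapping.lookup A k = Poly_Mapping.lookup B k" using assms(1) by simp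
qed

lemma gauss:
  fixes f p :: "'a::{factorial_semiring,idom} mpoly"
  assumes prim: "\<forall>q. prime q \<longrightarrow> \<not> (\<forall>m. q dvd Poly_Mapping.lookup f m)"
    and eq: "to_K f * h = to_K p"
  shows "\<exists>h1. to_K h1 = h"
proof -
  have main: "\<forall>h0. d \<noteq> 0 \<longrightarrow> to_K h0 = mconst (Fract d 1) * h \<longrightarrow> (\<exists>h1. to_K h1 = h)" for d
  proof (induction d rule: prime_divisors_induct)
    case zero then show ?case by simp
  next
    case (unit x)
    show ?case
    proof (intro allI impI)
      fix h0 assume H: "to_K h0 = mconst (Fract x 1) * h"
      from unit obtain e where e: "1 = x * e" by (rule dvdE)
      have "to_K (mconst e * h0) = mconst (Fract e 1) * (mconst (Fract x 1) * h)"
        by (simp only: to_K_mult to_K_mconst H)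
      also have "\<dots> = mconst (Fract (e * x) 1) * h"
        by (simp only: mult.assoc[symmetric] mconst_mult Fract1_mult)
      also have "\<dots> = h" using e by (simp add: mult.commute fract_collapse mconst_1)
      finally show "\<exists>h1. to_K h1 = h" by blast
    qed
  next
    case (factor q x)
    show ?case
    proof (intro allI impI)
      fix h0 assume nz: "q * x \<noteq> 0" and H: "to_K h0 = mconst (Fract (q * x) 1) * h"
      have "to_K (f * h0) = mconst (Fract (q * x) 1) * (to_K f * h)"
        by (simp only: to_K_mult H mult.left_commute)
      also have "\<dots> = to_K (mconst (q * x) * p)"
        by (simp only: eq to_K_mult to_K_mconst)
      finally have "f * h0 = mconst (q * x) * p" by (rule to_K_inj)
      then have "\<forall>m. q dvd Poly_Mapping.lookup (f * h0) m"
        by (simp add: lookup_mconst_mult)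
      then have dv: "\<forall>m. q dvd Poly_Mapping.lookup h0 m"
        using prime_content[OF factor(1)] prim factor(1) by blast
      define h1 where "h1 = Poly_Mapping.map (\<lambda>a. a div q) h0"
      have h0eq: "h0 = mconst q * h1" unfolding h1_def by (rule div_out[OF dv])
      have "mconst (Fract q 1) * to_K h1 = mconst (Fract q 1) * (mconst (Fract x 1) * h)"
      proof -
        have "mconst (Fract q 1) * to_K h1 = to_K h0" by (simp only: h0eq to_K_mult to_K_mconst)
        also have "\<dots> = mconst (Fract q 1) * (mconst (Fract x 1) * h)"
          by (simp only: H mult.assoc[symmetric] mconst_mult Fract1_mult)
        finally show ?thesis .
      qed
      moreover have "Fract q 1 \<noteq> 0" using factor(1) by (simp add: Fract1_0)
      ultimately have "to_K h1 = mconst (Fract x 1) * h" using mconst_cancel by blast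
      moreover have "x \<noteq> 0" using nz by simp
      ultimately show "\<exists>h1. to_K h1 = h" using factor(2) by blast
    qed
  qed
  obtain d h0 where "d \<noteq> 0" "to_K h0 = mconst (Fract d 1) * h" using clear_denoms by blast
  then show ?thesis using main by blast
qed

lemma make_primitive:
  fixes f0 :: "'a::{factorial_semiring,idom} mpoly"
  assumes "f0 \<noteq> 0"
  shows "\<exists>f' u. u \<noteq> 0 \<and> f0 = mconst u * f' \<and> (\<forall>q. prime q \<longrightarrow> \<not> (\<forall>m. q dvd Poly_Mapping.lookup f' m))"
proof -
  obtain m0 where m0: "Poly_Mapping.lookup f0 m0 \<noteq> 0"
    using assms by (metis poly_mapping_eqI lookup_zero)
  have main: "\<forall>f0::'a mpoly. Poly_Mapping.lookup f0 m0 \<noteq> 0 \<longrightarrow> size (prime_factorization (Poly_Mapping.lookup f0 m0)) = N \<longrightarrow>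
     (\<exists>f' u. u \<noteq> 0 \<and> f0 = mconst u * f' \<and> (\<forall>q. prime q \<longrightarrow> \<not> (\<forall>m. q dvd Poly_Mapping.lookup f' m)))" for N
  proof (induction N rule: less_induct)
    case (less N)
    show ?case
    proof (intro allI impI)
      fix f0 :: "'a mpoly"
      assume nz: "Poly_Mapping.lookup f0 m0 \<noteq> 0" and sz: "size (prime_factorization (Poly_Mapping.lookup f0 m0)) = N"
      show "\<exists>f' u. u \<noteq> 0 \<and> f0 = mconst u * f' \<and> (\<forall>q. prime q \<longrightarrow> \<not> (\<forall>m. q dvd Poly_Mapping.lookup f' m))"
      proof (cases "\<forall>q. prime q \<longrightarrow> \<not> (\<forall>m. q dvd Poly_Mapping.lookup f0 m)")
        case True
        then show ?thesis by (intro exI[of _ f0] exI[of _ 1]) (simp add: mconst_1)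
      next
        case False
        then obtain q where q: "prime q" "\<forall>m. q dvd Poly_Mapping.lookup f0 m" by blast
        define f1 where "f1 = Poly_Mapping.map (\<lambda>a. a div q) f0"
        have f0eq: "f0 = mconst q * f1" unfolding f1_def by (rule div_out[OF q(2)])
        have a: "Poly_Mapping.lookup f0 m0 = q * Poly_Mapping.lookup f1 m0"
          by (subst f0eq) (simp only: lookup_mconst_mult)
        have nz1: "Poly_Mapping.lookup f1 m0 \<noteq> 0" using nz a by auto
        have qnz: "q \<noteq> 0" using q(1) by auto
        have "size (prime_factorization (Poly_Mapping.lookup f0 m0)) = Suc (size (prime_factorization (Poly_Mapping.lookup f1 m0)))"
          unfolding a using prime_factorization_mult[OF qnz nz1] prime_factorization_prime[OF q(1)] by simp
        then have lt: "size (prime_factorization (Poly_Mapping.lookup f1 m0)) < N" using sz by simp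
        from mp[OF mp[OF spec[OF less.IH[OF lt], of f1] nz1] refl]
        obtain f' u where fu: "u \<noteq> 0" "f1 = mconst u * f'" "\<forall>q. prime q \<longrightarrow> \<not> (\<forall>m. q dvd Poly_Mapping.lookup f' m)"
          by blast
        have "f0 = mconst (q * u) * f'" by (simp only: f0eq fu(2) mult.assoc[symmetric] mconst_mult)
        moreover have "q * u \<noteq> 0" using qnz fu(1) by simp
        ultimately show ?thesis using fu(3) by blast
      qed
    qed
  qed
  show ?thesis using main m0 by blast
qed

lemma to_K_polys: "to_K p \<in> polys n \<longleftrightarrow> p \<in> polys n"
  by (simp add: polys_def)

lemma to_K_1: "to_K 1 = 1"
  using to_K_mconst[of 1] by (simp add: mconst_1 fract_collapse)

theorem lemma4p1:
  fixes n :: nat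
    and D :: "('a::{factorial_semiring, idom}) mpoly \<Rightarrow> 'a mpoly"
    and DK :: "'a fract mpoly \<Rightarrow> 'a fract mpoly"
  assumes contains_Q: "\<forall>m::nat. m \<noteq> 0 \<longrightarrow> is_unit (of_nat m :: 'a)"
    and D_LND: "is_LND n D"
    and DK_der: "is_R_derivation n DK"
    and DK_ext: "\<forall>f \<in> polys n. DK (to_K f) = to_K (D f)"
    and D_irr: "irreducible_der n D"
  shows "irreducible_der n DK"
  unfolding irreducible_der_def
proof
  assume "reducible_der n DK"
  then obtain f where f: "f \<in> polys n" "\<not> (\<exists>u\<in>polys n. f * u = 1)"
      "\<forall>g\<in>polys n. \<exists>h\<in>polys n. DK g = f * h"
    unfolding reducible_der_def by blast
  have Dpol: "D g \<in> polys n" if "g \<in> polys n" for g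
    using D_LND that unfolding is_LND_def is_R_derivation_def by blast
  have "reducible_der n D"
  proof (cases "f = 0")
    case True
    show ?thesis unfolding reducible_der_def
    proof (intro bexI[of _ 0] conjI)
      show "(0::'a mpoly) \<in> polys n" by (simp add: polys_def)
      show "\<not> (\<exists>u\<in>polys n. 0 * u = (1::'a mpoly))" by simp
      show "\<forall>g\<in>polys n. \<exists>h\<in>polys n. D g = 0 * h"
      proof
        fix g :: "'a mpoly" assume g: "g \<in> polys n"
        have gK: "to_K g \<in> polys n" using g by (simp add: to_K_polys)
        obtain h where "DK (to_K g) = f * h" using f(3) gK by blast
        then have "to_K (D g) = to_K 0" using DK_ext g True by simp
        then have "D g = 0" by (rule to_K_inj)
        then show "\<exists>h\<in>polys n. D g = 0 * h" by (intro bexI[of _ 0]) (simp_all add: polys_def)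
      qed
    qed
  next
    case False
    obtain d f0 where df: "d \<noteq> 0" "to_K f0 = mconst (Fract d 1) * f" using clear_denoms by blast
    have dK: "Fract d 1 \<noteq> 0" using df(1) by (simp add: Fract1_0)
    have f0nz: "f0 \<noteq> 0"
    proof
      assume "f0 = 0"
      then have "mconst (Fract d 1) * f = mconst (Fract d 1) * 0" using df(2) by simp
      then have "f = 0" by (rule mconst_cancel[OF dK])
      with False show False by simp
    qed
    obtain f' u where fu: "u \<noteq> 0" "f0 = mconst u * f'"
        "\<forall>q. prime q \<longrightarrow> \<not> (\<forall>m. q dvd Poly_Mapping.lookup f' m)"
      using make_primitive[OF f0nz] by blast
    have uK: "Fract u 1 \<noteq> 0" using fu(1) by (simp add: Fract1_0)
    define c where "c = Fract d 1 / Fract u 1"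
    have cnz: "c \<noteq> 0" unfolding c_def using dK uK by (simp del: divide_fract)
    have "mconst (Fract u 1) * to_K f' = mconst (Fract u 1) * (mconst c * f)"
    proof -
      have "mconst (Fract u 1) * to_K f' = to_K f0" by (simp only: fu(2) to_K_mult to_K_mconst)
      also have "\<dots> = mconst (Fract u 1 * c) * f" using uK by (simp add: df(2) c_def del: divide_fract mult_fract)
      also have "\<dots> = mconst (Fract u 1) * (mconst c * f)" by (simp only: mconst_mult[symmetric] mult.assoc)
      finally show ?thesis .
    qed
    then have f'K: "to_K f' = mconst c * f" by (rule mconst_cancel[OF uK])
    have cinv: "mconst (inverse c) * mconst c = 1" by (simp only: mconst_mult left_inverse[OF cnz] mconst_1)
    have "to_K f' \<in> polys n"
      unfolding f'K using mconst_polys f(1) by (rule polys_mult)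
    then have f'pol: "f' \<in> polys n" by (simp only: to_K_polys)
    show ?thesis unfolding reducible_der_def
    proof (intro bexI[of _ f'] conjI)
      show "f' \<in> polys n" by (rule f'pol)
      show "\<not> (\<exists>v\<in>polys n. f' * v = 1)"
      proof
        assume "\<exists>v\<in>polys n. f' * v = 1"
        then obtain v where v: "v \<in> polys n" "f' * v = 1" by blast
        have "to_K (f' * v) = 1" using v(2) to_K_1 by simp
        then have "f * (mconst c * to_K v) = 1" by (simp only: to_K_mult f'K mult.assoc mult.left_commute)
        moreover have "mconst c * to_K v \<in> polys n"
          using mconst_polys v(1) by (intro polys_mult) (simp_all add: to_K_polys)
        ultimately show False using f(2) by blast
      qed
      show "\<forall>g\<in>polys n. \<exists>h\<in>polys n. D g = f' * h"
      proof
        fix g :: "'a mpoly" assume g: "g \<in> polys n"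
        have gK: "to_K g \<in> polys n" using g by (simp add: to_K_polys)
        obtain h where h: "h \<in> polys n" "DK (to_K g) = f * h" using f(3) gK by blast
        have Dg: "to_K (D g) = f * h" using h(2) DK_ext g by simp
        define h' where "h' = mconst (inverse c) * h"
        have h'pol: "h' \<in> polys n" unfolding h'_def using mconst_polys h(1) by (rule polys_mult)
        have "to_K f' * h' = (mconst (inverse c) * mconst c) * (f * h)"
          by (simp only: f'K h'_def mult.assoc mult.left_commute)
        also have "\<dots> = to_K (D g)" by (simp only: cinv mult_1_left Dg)
        finally have eq: "to_K f' * h' = to_K (D g)" .
        obtain h1 where h1: "to_K h1 = h'" using gauss[OF fu(3) eq] by blast
        have "to_K (f' * h1) = to_K (D g)" by (simp only: to_K_mult h1 eq)
        then have "D g = f' * h1" by (rule to_K_inj[OF sym])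
        moreover have "h1 \<in> polys n" using h'pol unfolding h1[symmetric] to_K_polys .
        ultimately show "\<exists>h\<in>polys n. D g = f' * h" by blast
      qed
    qed
  qed
  with D_irr show False unfolding irreducible_der_def by blast
qed


end
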